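(* Let $\mathfrak q:\mathbb R^n\to\mathbb R$ be a non-degenerate quadratic form with rational coefficients, $\mathfrak Q_{\mathfrak q}=\{\bar x:\mathfrak q(\bar x)=1\}$, and let $\psi$ be an approximating function with $\lim_{x\to\infty}x\psi(x)=0$. Let $\bar x\in\mathfrak Q_{\mathfrak q}$ and let $\frac1q\bar p\in\mathbb Q^n$ satisfy $\|\bar x-\frac1q\bar p\|\le\frac{\psi(q)}{q}$. If $q$ is large enough, then $\frac1q\bar p\in\mathfrak Q_{\mathfrak q}$.
   Context: $\|\cdot\|$ is the max-norm. An approximating function is a decreasing $\psi:\mathbb R_+\to\mathbb R_+$ with $\psi(x)\to0$ as $x\to\infty$. Rational vectors are written $\frac1q\bar p$ with $q\in\mathbb N$, $\bar p\in\mathbb Z^n$, $\gcd(q,p_1,\dots,p_n)=1$. *)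

theory Defs
  imports "HOL-Analysis.Analysis"
begin

definition maxnorm :: "real^'n \<Rightarrow> real" where
  "maxnorm x = Max (range (\<lambda>i. \<bar>x $ i\<bar>))"

definition quadform :: "real^'n^'n \<Rightarrow> real^'n \<Rightarrow> real" where
  "quadform A x = x \<bullet> (A *v x)"

definition approximating_function :: "(real \<Rightarrow> real) \<Rightarrow> bool" where
  "approximating_function \<psi> \<longleftrightarrow>
     (\<forall>x y. 0 \<le> x \<longrightarrow> x \<le> y \<longrightarrow> \<psi> y \<le> \<psi> x) \<and>
     (\<forall>x\<ge>0. 0 \<le> \<psi> x) \<and> (\<psi> \<longlongrightarrow> 0) at_top"

definition rat_vec :: "int^'n \<Rightarrow> nat \<Rightarrow> real^'n" where
  "rat_vec p q = (\<chi> i. real_of_int (p $ i) / real q)"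

definition reduced :: "int^'n \<Rightarrow> nat \<Rightarrow> bool" where
  "reduced p q \<longleftrightarrow> 0 < q \<and> Gcd (insert (int q) (range (\<lambda>i. p $ i))) = 1"

end

theory Submission
  imports Defs
begin

lemma common_denom:
  assumes "finite S" "\<forall>r\<in>S. r \<in> \<rat>"
  shows "\<exists>d::nat. d > 0 \<and> (\<forall>r\<in>S. real d * r \<in> \<int>)"
  using assms
proof (induction S rule: finite_induct)
  case empty
  then show ?case by (intro exI[of _ 1]) auto
next
  case (insert r S)
  then obtain d::nat where d: "d > 0" "\<forall>s\<in>S. real d * s \<in> \<int>" by auto
  from insert have "r \<in> \<rat>" by auto
  then obtain a :: int and b0 :: int where ab0: "b0 > 0" "r = of_int a / of_int b0"
    by (auto elim!: Rats_cases')
  define b where "b = nat b0"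
  have ab: "b > 0" "r = of_int a / of_nat b" using ab0 by (auto simp: b_def)
  have "real (d*b) * r = of_int (int d * a)" using ab by simp
  moreover have "real (d*b) * s \<in> \<int>" if "s \<in> S" for s
  proof -
    have "real (d*b) * s = real b * (real d * s)" by simp
    thus ?thesis using d(2) that by (metis Ints_mult Ints_of_nat)
  qed
  ultimately show ?case using d ab by (intro exI[of _ "d*b"]) auto
qed

lemma quadform_expand:
  "quadform A v = (\<Sum>i\<in>UNIV. \<Sum>j\<in>UNIV. A$i$j * v$i * v$j)"
  by (simp add: quadform_def inner_vec_def matrix_vector_mult_def sum_distrib_left mult_ac)

lemma maxnorm_ge: "\<bar>v $ i\<bar> \<le> maxnorm v"
  unfolding maxnorm_def by (rule Max_ge) auto

theorem lemma4p1:
  fixes A :: "real^'n^'n" and \<psi> :: "real \<Rightarrow> real" and x :: "real^'n"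
  assumes rat: "\<forall>i j. A $ i $ j \<in> \<rat>"
    and sym: "transpose A = A"
    and nondeg: "det A \<noteq> 0"
    and psi: "approximating_function \<psi>"
    and lim: "((\<lambda>t. t * \<psi> t) \<longlongrightarrow> 0) at_top"
    and xQ: "quadform A x = 1"
  shows "\<exists>Q0::nat. \<forall>(q::nat) (p::int^'n).
           Q0 \<le> q \<longrightarrow> reduced p q \<longrightarrow>
           maxnorm (x - rat_vec p q) \<le> \<psi> (real q) / real q \<longrightarrow>
           quadform A (rat_vec p q) = 1"
proof -
  have "finite (range (\<lambda>(i,j). A$i$j))" by simp
  moreover have "\<forall>r\<in>range (\<lambda>(i,j). A$i$j). r \<in> \<rat>" using rat by auto
  ultimately obtain d::nat where d: "d > 0" "\<forall>r\<in>range (\<lambda>(i,j). A$i$j). real d * r \<in> \<int>"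
    using common_denom by blast
  have dA: "real d * A$i$j \<in> \<int>" for i j using d(2) by force
  define K where "K = (\<Sum>i\<in>UNIV. \<Sum>j\<in>UNIV. \<bar>A$i$j\<bar> * (\<bar>x$i\<bar> + \<bar>x$j\<bar> + 1))"
  have K0: "K \<ge> 0" unfolding K_def by (intro sum_nonneg) auto
  define c where "c = 1 / (real d * (K + 1))"
  have c0: "c > 0" using d K0 by (simp add: c_def)
  have c1: "c \<le> 1"
  proof -
    have "real d \<ge> 1" using d by simp
    moreover have "K + 1 \<ge> 1" using K0 by simp
    ultimately have "real d * (K + 1) \<ge> 1 * 1" by (intro mult_mono) auto
    thus ?thesis by (simp add: c_def)
  qed
  from lim c0 have "eventually (\<lambda>t. \<bar>t * \<psi> t\<bar> < c) at_top"
    by (simp add: tendsto_iff dist_real_def)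
  then obtain N where N: "\<And>t. t \<ge> N \<Longrightarrow> \<bar>t * \<psi> t\<bar> < c"
    by (auto simp: eventually_at_top_linorder)
  show ?thesis
  proof (intro exI[of _ "nat \<lceil>N\<rceil> + 1"] allI impI)
    fix q :: nat and p :: "int^'n"
    assume q: "nat \<lceil>N\<rceil> + 1 \<le> q" and red: "reduced p q"
      and close: "maxnorm (x - rat_vec p q) \<le> \<psi> (real q) / real q"
    define y where "y = rat_vec p q"
    define e where "e = maxnorm (x - y)"
    have q1: "real q \<ge> 1" using q by simp
    have qN: "real q \<ge> N" using q by linarith
    have psi0: "\<psi> (real q) \<ge> 0" using psi unfolding approximating_function_def by auto
    have small: "real q * \<psi> (real q) < c" using N[OF qN] by simp
    have e_le: "e \<le> \<psi> (real q) / real q" using close by (simp add: e_def y_def)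
    have "\<psi> (real q) / real q \<le> real q * \<psi> (real q)"
    proof -
      have "\<psi> (real q) / real q \<le> \<psi> (real q)" using q1 psi0 mult_left_mono[of 1 "real q" "\<psi> (real q)"] by (simp add: divide_le_eq)
      also have "\<dots> \<le> real q * \<psi> (real q)" using q1 psi0 mult_right_mono[of 1 "real q" "\<psi> (real q)"] by simp
      finally show ?thesis .
    qed
    hence e_le2: "e \<le> real q * \<psi> (real q)" using e_le by linarith
    have e1: "e \<le> 1" using e_le2 small c1 by linarith
    have ei: "\<bar>y$i - x$i\<bar> \<le> e" for i
      using maxnorm_ge[of "x - y" i] by (simp add: e_def abs_minus_commute)
    have e0: "e \<ge> 0" using ei[of undefined] by linarith
    have term_bd: "\<bar>y$i * y$j - x$i * x$j\<bar> \<le> e * (\<bar>x$i\<bar> + \<bar>x$j\<bar> + 1)" for i j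
    proof -
      define a where "a = y$i - x$i"
      define b where "b = y$j - x$j"
      have "y$i * y$j - x$i * x$j = a * (x$j + b) + x$i * b" by (simp add: a_def b_def algebra_simps)
      have "\<bar>y$i * y$j - x$i * x$j\<bar> \<le> \<bar>a\<bar> * (\<bar>x$j\<bar> + \<bar>b\<bar>) + \<bar>x$i\<bar> * \<bar>b\<bar>"
      proof -
        have "\<bar>a * (x$j + b) + x$i * b\<bar> \<le> \<bar>a * (x$j + b)\<bar> + \<bar>x$i * b\<bar>" by (rule abs_triangle_ineq)
        also have "\<bar>a * (x$j + b)\<bar> = \<bar>a\<bar> * \<bar>x$j + b\<bar>" by (rule abs_mult)
        also have "\<dots> \<le> \<bar>a\<bar> * (\<bar>x$j\<bar> + \<bar>b\<bar>)" by (intro mult_left_mono abs_triangle_ineq) simp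
        also have "\<bar>x$i * b\<bar> = \<bar>x$i\<bar> * \<bar>b\<bar>" by (rule abs_mult)
        finally show ?thesis using \<open>y$i * y$j - x$i * x$j = a * (x$j + b) + x$i * b\<close> by simp
      qed
      also have "\<dots> \<le> e * (\<bar>x$j\<bar> + 1) + \<bar>x$i\<bar> * e"
        using ei[of i] ei[of j] e1 unfolding a_def[symmetric] b_def[symmetric]
        by (intro add_mono mult_mono) auto
      finally show ?thesis by (simp add: algebra_simps)
    qed
    have diff: "quadform A y - quadform A x = (\<Sum>i\<in>UNIV. \<Sum>j\<in>UNIV. A$i$j * (y$i * y$j - x$i * x$j))"
      by (simp add: quadform_expand sum_subtractf[symmetric] algebra_simps)
    have bd: "\<bar>quadform A y - 1\<bar> \<le> K * e"
    proof -
      have "\<bar>quadform A y - 1\<bar> \<le> (\<Sum>i\<in>UNIV. \<Sum>j\<in>UNIV. \<bar>A$i$j * (y$i * y$j - x$i * x$j)\<bar>)"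
        unfolding xQ[symmetric] diff
        by (rule order_trans[OF sum_abs]) (intro sum_mono sum_abs)
      also have "\<dots> \<le> (\<Sum>i\<in>UNIV. \<Sum>j\<in>UNIV. e * (\<bar>A$i$j\<bar> * (\<bar>x$i\<bar> + \<bar>x$j\<bar> + 1)))"
        by (intro sum_mono) (simp add: abs_mult mult_left_mono term_bd mult.left_commute[of e])
      also have "\<dots> = K * e" by (simp add: K_def sum_distrib_left mult_ac)
      finally show ?thesis .
    qed
    have qpos: "q > 0" using q1 by simp
    have yi: "y$i = real_of_int (p$i) / real q" for i by (simp add: y_def rat_vec_def)
    have intg: "real d * (real q)^2 * quadform A y \<in> \<int>"
    proof -
      have "real d * (real q)^2 * quadform A y =
          (\<Sum>i\<in>UNIV. \<Sum>j\<in>UNIV. (real d * A$i$j) * of_int (p$i) * of_int (p$j))"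
        unfolding quadform_expand sum_distrib_left
      proof (intro sum.cong refl)
        fix i j
        show "real d * (real q)\<^sup>2 * (A $ i $ j * y $ i * y $ j) =
          real d * A $ i $ j * real_of_int (p $ i) * real_of_int (p $ j)"
          using qpos unfolding yi by (simp add: power2_eq_square)
      qed
      also have "\<dots> \<in> \<int>" by (intro Ints_sum) (metis dA Ints_mult Ints_of_int)
      finally show ?thesis .
    qed
    show "quadform A (rat_vec p q) = 1"
    proof (rule ccontr)
      assume ne: "quadform A (rat_vec p q) \<noteq> 1"
      define z where "z = real d * (real q)^2 * quadform A y - real d * (real q)^2"
      have zI: "z \<in> \<int>" using intg by (simp add: z_def)
      have "z \<noteq> 0" using ne d qpos by (simp add: z_def y_def)
      hence z1: "\<bar>z\<bar> \<ge> 1" using zI by (simp add: Ints_nonzero_abs_ge1)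
      have "\<bar>z\<bar> = real d * (real q)^2 * \<bar>quadform A y - 1\<bar>"
      proof -
        have "z = real d * (real q)^2 * (quadform A y - 1)" by (simp add: z_def right_diff_distrib)
        thus ?thesis by (simp add: abs_mult)
      qed
      also have "\<dots> \<le> real d * (real q)^2 * (K * e)"
        using bd by (intro mult_left_mono) auto
      also have "\<dots> \<le> real d * (real q)^2 * (K * (\<psi> (real q) / real q))"
        using e_le K0 by (intro mult_left_mono) auto
      also have "\<dots> = real d * K * (real q * \<psi> (real q))"
        using qpos by (simp add: power2_eq_square field_simps)
      also have "\<dots> \<le> real d * K * c"
        using small d K0 by (intro mult_left_mono) auto
      also have "\<dots> = K / (K + 1)" using d K0 by (simp add: c_def)
      also have "\<dots> < 1" using K0 by simp
      finally show False using z1 by linarith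
    qed
  qed
qed

end
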